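(* For every $k\in\mathbb{N}$ and every $\epsilon\ge 0$, $$\Pr\{\chi^2_k\ge k(1+\epsilon)\}\ \ge\ \frac{1}{3\sqrt{k}\,\epsilon+6}\exp\left(-\frac{k\epsilon}{2}\right),$$ where $\chi^2_k$ denotes a chi-square random variable with $k$ degrees of freedom. *)

theory Defs
  imports "HOL-Probability.Probability"
begin

text \<open>A chi-square random variable with k degrees of freedom is, by definition,
  the sum of squares of k independent standard normal random variables.\<close>

definition chi_square_rv :: "'a measure \<Rightarrow> nat \<Rightarrow> (nat \<Rightarrow> 'a \<Rightarrow> real) \<Rightarrow> bool" where
  "chi_square_rv M k X \<longleftrightarrow>
     prob_space M \<and>
     prob_space.indep_vars M (\<lambda>_. borel) X {..<k} \<and>
     (\<forall>i<k. distributed M lborel (X i) (\<lambda>x. ennreal (std_normal_density x)))"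

end

theory Submission
  imports Defs
begin

lemma ln_lower_aux:
  fixes x :: real assumes "0 \<le> x"
  shows "2 * x / (2 + x) \<le> ln (1 + x)"
proof -
  let ?f = "\<lambda>x::real. ln (1 + x) - 2 * x / (2 + x)"
  have "?f 0 \<le> ?f x"
  proof (rule DERIV_nonneg_imp_nondecreasing[OF assms])
    fix t :: real assume t: "0 \<le> t" "t \<le> x"
    have "(?f has_real_derivative (1 / (1 + t) - 4 / (2 + t)^2)) (at t)"
      using t by (auto intro!: derivative_eq_intros simp: field_simps power2_eq_square)
    moreover have p1: "1 + t > 0" and p2: "2 + t > 0" using t by auto
    have h: "4 * (1 + t) \<le> (2 + t)^2" by (simp add: power2_eq_square algebra_simps)
    have "4 / (2 + t)^2 \<le> 1 / (1 + t)"
      using p1 p2 h by (simp add: divide_simps)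
    then have "1 / (1 + t) - 4 / (2 + t)^2 \<ge> 0" by simp
    ultimately show "\<exists>y. (?f has_real_derivative y) (at t) \<and> 0 \<le> y" by blast
  qed
  then show ?thesis by simp
qed

lemma stirling_step:
  fixes m :: nat assumes m: "m \<ge> 1"
  shows "exp 1 * sqrt (real m) * real m ^ m \<le> sqrt (real m + 1) * (real m + 1) ^ m"
proof -
  have mpos: "real m > 0" using m by simp
  have "2 * (1 / real m) / (2 + 1 / real m) \<le> ln (1 + 1 / real m)"
    by (rule ln_lower_aux) simp
  moreover have "2 * (1 / real m) / (2 + 1 / real m) = 2 / (2 * real m + 1)"
    using mpos by (simp add: field_simps)
  ultimately have "2 / (2 * real m + 1) \<le> ln (1 + 1 / real m)" by simp
  then have L: "1 \<le> (real m + 1/2) * ln (1 + 1 / real m)"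
    using mpos by (simp add: field_simps)
  have "1 + 1 / real m > 0" using mpos by (simp add: add_pos_nonneg)
  have "exp 1 \<le> exp ((real m + 1/2) * ln (1 + 1 / real m))"
    using L by simp
  also have "\<dots> = (1 + 1 / real m) powr (real m + 1/2)"
    using mpos by (simp add: powr_def) (smt (verit) divide_nonneg_nonneg of_nat_0_le_iff)
  also have "\<dots> = (1 + 1 / real m) ^ m * sqrt (1 + 1 / real m)"
    using mpos \<open>1 + 1 / real m > 0\<close> by (simp add: powr_add powr_realpow powr_half_sqrt)
  also have "\<dots> = ((real m + 1) ^ m / real m ^ m) * (sqrt (real m + 1) / sqrt (real m))"
    using mpos by (simp add: field_simps power_divide real_sqrt_divide)
  finally have "exp 1 \<le> ((real m + 1) ^ m / real m ^ m) * (sqrt (real m + 1) / sqrt (real m))" .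
  then show ?thesis using mpos by (simp add: field_simps)
qed

lemma fact_upper:
  fixes m :: nat assumes "m \<ge> 1"
  shows "fact m \<le> exp 1 * sqrt (real m) * real m ^ m / exp (real m)"
  using assms
proof (induction m rule: nat_induct_at_least)
  case base
  then show ?case by simp
next
  case (Suc n)
  have npos: "real n > 0" using Suc by simp
  have "fact (Suc n) = (real n + 1) * fact n" by simp
  also have "\<dots> \<le> (real n + 1) * (exp 1 * sqrt (real n) * real n ^ n / exp (real n))"
    using Suc.IH by (intro mult_left_mono) auto
  also have "\<dots> = (real n + 1) * (exp 1 * sqrt (real n) * real n ^ n) / exp (real n)"
    by simp
  also have "\<dots> \<le> (real n + 1) * (sqrt (real n + 1) * (real n + 1) ^ n) / exp (real n)"
    using stirling_step[OF Suc.hyps] by (intro divide_right_mono mult_left_mono) auto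
  also have "\<dots> = exp 1 * sqrt (real (Suc n)) * real (Suc n) ^ Suc n / exp (real (Suc n))"
    by (simp add: exp_add field_simps)
  finally show ?case .
qed

lemma term_rel:
  fixes m j :: nat assumes "m \<ge> 1" "j \<ge> 1"
  shows "real m ^ (j - 1) / fact (j - 1) = (real m ^ j / fact j) * real j / real m"
proof -
  obtain q where j: "j = Suc q" using assms by (cases j) auto
  have mp: "real m > 0" using assms by simp
  have f: "(fact (Suc q)::real) = (real q + 1) * fact q" by simp
  have fp: "(fact q :: real) > 0" by simp
  have qp: "real q + 1 > 0" by simp
  have "(real m ^ Suc q / fact (Suc q)) * real (Suc q) / real m
        = (real m * real m ^ q) * (real q + 1) / (((real q + 1) * fact q) * real m)"
    by (simp only: f power_Suc of_nat_Suc) (simp add: algebra_simps)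
  also have "\<dots> = real m ^ q / fact q"
    using mp fp qp by (simp add: divide_simps)
  finally show ?thesis unfolding j by simp
qed

lemma term_bound:
  fixes m i :: nat assumes m: "m \<ge> 1" and i: "i < m"
  shows "real m ^ (m - 1 - i) / fact (m - 1 - i) \<ge> (real m ^ m / fact m) * (1 - real i * (real i + 1) / (2 * real m))"
  using i
proof (induction i)
  case 0
  have "real m ^ (m - 1) / fact (m - 1) = (real m ^ m / fact m) * real m / real m"
    using term_rel[OF m m] by simp
  then show ?case using m by simp
next
  case (Suc i)
  let ?C = "real m ^ m / fact m"
  let ?b = "1 - real i * (real i + 1) / (2 * real m)"
  have mpos: "real m > 0" using m by simp
  have IH: "real m ^ (m - 1 - i) / fact (m - 1 - i) \<ge> ?C * ?b" using Suc by simp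
  have j1: "m - 1 - i \<ge> 1" using Suc.prems by simp
  have eq: "real m ^ (m - 1 - Suc i) / fact (m - 1 - Suc i) =
     (real m ^ (m - 1 - i) / fact (m - 1 - i)) * real (m - 1 - i) / real m"
  proof -
    have e1: "m - 1 - Suc i = (m - 1 - i) - 1" by simp
    show ?thesis unfolding e1 by (rule term_rel[OF m j1])
  qed
  have fr: "real (m - 1 - i) / real m \<ge> 0" by simp
  have "(real m ^ (m - 1 - i) / fact (m - 1 - i)) * real (m - 1 - i) / real m \<ge> ?C * ?b * (real (m - 1 - i) / real m)"
    using mult_right_mono[OF IH fr] by simp
  moreover have "real (m - 1 - i) / real m = 1 - (real i + 1) / real m"
  proof -
    have e2: "m - 1 - i = m - (i + 1)" by simp
    have "real (m - (i + 1)) = real m - (real i + 1)"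
      using Suc.prems by (subst of_nat_diff) auto
    then have "real (m - 1 - i) = real m - (real i + 1)" unfolding e2 .
    then show ?thesis using mpos by (simp add: diff_divide_distrib)
  qed
  moreover have "?b * (1 - (real i + 1) / real m) \<ge> 1 - real (Suc i) * (real (Suc i) + 1) / (2 * real m)"
  proof -
    have b1: "?b \<le> 1" using mpos by simp
    have "?b * (1 - (real i + 1) / real m) = ?b - ?b * ((real i + 1) / real m)" by (simp only: right_diff_distrib mult_1_right)
    also have "\<dots> \<ge> ?b - (real i + 1) / real m"
      using mult_right_mono[OF b1, of "(real i + 1) / real m"] mpos by simp
    also have "?b - (real i + 1) / real m = 1 - real (Suc i) * (real (Suc i) + 1) / (2 * real m)"
      using mpos by (simp add: field_simps)
    finally show ?thesis by simp
  qed
  moreover have "?C \<ge> 0" by simp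
  ultimately have "?C * (?b * (real (m - 1 - i) / real m)) \<ge> ?C * (1 - real (Suc i) * (real (Suc i) + 1) / (2 * real m))"
    by (intro mult_left_mono) auto
  then have "?C * ?b * (real (m - 1 - i) / real m) \<ge> ?C * (1 - real (Suc i) * (real (Suc i) + 1) / (2 * real m))"
    by (simp add: mult.assoc)
  then show ?case using eq \<open>(real m ^ (m - 1 - i) / fact (m - 1 - i)) * real (m - 1 - i) / real m \<ge> ?C * ?b * (real (m - 1 - i) / real m)\<close>
    by linarith
qed

lemma sum_i_i1: "(\<Sum>i<N. real i * (real i + 1)) = (real N - 1) * real N * (real N + 1) / 3"
  by (induction N) (auto simp: field_simps)

lemma poisson_partial:
  fixes m N :: nat assumes m: "m \<ge> 1" and N: "N \<le> m"
  shows "(\<Sum>n<m. real m ^ n / fact n) \<ge> (real m ^ m / fact m) * (real N - (real N - 1) * real N * (real N + 1) / (6 * real m))"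
proof -
  let ?T = "\<lambda>n. real m ^ n / fact n"
  let ?C = "real m ^ m / fact m"
  have mpos: "real m > 0" using m by simp
  have inj: "inj_on (\<lambda>i. m - 1 - i) {..<N}"
    using N by (auto simp: inj_on_def)
  have sub: "(\<lambda>i. m - 1 - i) ` {..<N} \<subseteq> {..<m}" using m by auto
  have "(\<Sum>i<N. ?T (m - 1 - i)) = (\<Sum>n\<in>(\<lambda>i. m - 1 - i) ` {..<N}. ?T n)"
    by (subst sum.reindex[OF inj]) (simp add: comp_def)
  also have "\<dots> \<le> (\<Sum>n<m. ?T n)"
    by (rule sum_mono2[OF _ sub]) auto
  finally have A: "(\<Sum>i<N. ?T (m - 1 - i)) \<le> (\<Sum>n<m. ?T n)" .
  have B: "(\<Sum>i<N. ?C * (1 - real i * (real i + 1) / (2 * real m))) \<le> (\<Sum>i<N. ?T (m - 1 - i))"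
  proof (rule sum_mono)
    fix i assume "i \<in> {..<N}"
    then have "i < m" using N by simp
    then show "?C * (1 - real i * (real i + 1) / (2 * real m)) \<le> ?T (m - 1 - i)"
      using term_bound[OF m] by blast
  qed
  have C1: "(\<Sum>i<N. ?C * (1 - real i * (real i + 1) / (2 * real m)))
       = ?C * (\<Sum>i<N. (1 - real i * (real i + 1) / (2 * real m)))"
    by (simp only: sum_distrib_left)
  have C2: "(\<Sum>i<N. (1 - real i * (real i + 1) / (2 * real m))) = real N - (\<Sum>i<N. real i * (real i + 1)) / (2 * real m)"
    by (simp only: sum_subtractf sum_divide_distrib[symmetric]) simp
  have C3: "real N - (\<Sum>i<N. real i * (real i + 1)) / (2 * real m) = real N - (real N - 1) * real N * (real N + 1) / (6 * real m)"
    by (simp add: sum_i_i1)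
  have "?C * (real N - (real N - 1) * real N * (real N + 1) / (6 * real m)) \<le> (\<Sum>i<N. ?T (m - 1 - i))"
    using B C1 C2 C3 by simp
  then show ?thesis using A by (rule order.trans)
qed


lemma poly_s:
  fixes s :: real assumes "8/9 \<le> s" "s \<le> 2"
  shows "2013/100 \<le> s * (6 - s)^2"
proof -
  consider "s \<le> 1" | "1 \<le> s \<and> s \<le> 6/5" | "6/5 \<le> s \<and> s \<le> 3/2" | "3/2 \<le> s" by linarith
  then show ?thesis
  proof cases
    case 1
    have "(5::real)^2 \<le> (6 - s)^2" using 1 by (intro power_mono) auto
    then have "8/9 * 5^2 \<le> s * (6 - s)^2" using assms by (intro mult_mono) auto
    then show ?thesis by (simp add: power2_eq_square)
  next
    case 2
    have "(24/5::real)^2 \<le> (6 - s)^2" using 2 by (intro power_mono) auto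
    then have "1 * (24/5)^2 \<le> s * (6 - s)^2" using 2 by (intro mult_mono) auto
    then show ?thesis by (simp add: power2_eq_square)
  next
    case 3
    have "(9/2::real)^2 \<le> (6 - s)^2" using 3 by (intro power_mono) auto
    then have "6/5 * (9/2)^2 \<le> s * (6 - s)^2" using 3 by (intro mult_mono) auto
    then show ?thesis by (simp add: power2_eq_square)
  next
    case 4
    have "(4::real)^2 \<le> (6 - s)^2" using assms by (intro power_mono) auto
    then have "3/2 * 4^2 \<le> s * (6 - s)^2" using 4 by (intro mult_mono) auto
    then show ?thesis by (simp add: power2_eq_square)
  qed
qed

lemma exists_N:
  fixes m :: nat assumes "m \<ge> 1"
  obtains N where "N \<ge> 1" "N^2 \<le> 2 * m" "2 * m < (N + 1)^2"
proof -
  define N where "N = (LEAST n. 2 * m < (n + 1)^2)"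
  have w: "2 * m < (2 * m + 1)^2" by (simp add: power2_eq_square)
  have h1: "2 * m < (N + 1)^2" unfolding N_def by (rule LeastI[where P="\<lambda>n. 2 * m < (n + 1)^2", OF w])
  have h2: "N^2 \<le> 2 * m"
  proof (cases N)
    case 0 then show ?thesis by simp
  next
    case (Suc p)
    have "\<not> 2 * m < (p + 1)^2"
      using not_less_Least[of p "\<lambda>n. 2 * m < (n + 1)^2"] Suc unfolding N_def by simp
    then show ?thesis using Suc by simp
  qed
  have h3: "N \<ge> 1"
  proof (rule ccontr)
    assume "\<not> N \<ge> 1" then have "N = 0" by simp
    then show False using h1 assms by simp
  qed
  show ?thesis using h1 h2 h3 that by blast
qed

lemma poisson_main:
  fixes m :: nat assumes m: "m \<ge> 1"
  shows "exp (1/2) / 6 \<le> exp (- real m) * (\<Sum>n<m. real m ^ n / fact n)"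
proof -
  obtain N where N1: "N \<ge> 1" and N2: "N^2 \<le> 2 * m" and N3: "2 * m < (N + 1)^2"
    using exists_N[OF m] by blast
  have Nm: "N \<le> m"
  proof (cases "N = 1")
    case True then show ?thesis using m by simp
  next
    case False
    have N2': "N \<ge> 2" using N1 False by simp
    have "2 * N \<le> N * N" using N2' by (intro mult_right_mono) auto
    moreover have "N * N \<le> 2 * m" using N2 by (simp add: power2_eq_square)
    ultimately have "2 * N \<le> 2 * m" by (rule order_trans)
    then show ?thesis by simp
  qed
  define n where "n = real N"
  define x where "x = real m"
  have xpos: "x \<ge> 1" using m unfolding x_def by simp
  have n1: "n \<ge> 1" using N1 unfolding n_def by simp
  have "real (N^2) \<le> real (2 * m)" using N2 by (simp only: of_nat_le_iff)
  then have n2: "n^2 \<le> 2 * x" unfolding n_def x_def by simp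
  have "real (2 * m) < real ((N + 1)^2)" using N3 by (simp only: of_nat_less_iff)
  then have n3: "2 * x < (n + 1)^2" unfolding n_def x_def by (simp add: add.commute)
  define s where "s = n^2 / x"
  have s2: "s \<le> 2" using n2 xpos unfolding s_def by (simp add: divide_simps)
  have s1: "8/9 \<le> s"
  proof (cases "N = 1")
    case True
    then have "m = 1" using N3 m by (simp add: power2_eq_square)
    then show ?thesis using True unfolding s_def n_def x_def by simp
  next
    case False
    then have "n \<ge> 2" using N1 unfolding n_def by simp
    then have "(n + 1)^2 \<le> (3/2 * n)^2" by (intro power_mono) auto
    moreover have "(3/2 * n)^2 = 9/4 * n^2" by (simp add: power2_eq_square)
    ultimately have "2 * x < 9/4 * n^2" using n3 by linarith
    then show ?thesis using xpos unfolding s_def by (simp add: divide_simps)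
  qed
  define F where "F = n - (n - 1) * n * (n + 1) / (6 * x)"
  define G where "G = 6 * n - n^3 / x"
  have FG: "6 * F \<ge> G"
  proof -
    have "(n - 1) * n * (n + 1) \<le> n^3" using n1 by (simp add: algebra_simps power3_eq_cube)
    then have "(n - 1) * n * (n + 1) / x \<le> n^3 / x" using xpos by (intro divide_right_mono) auto
    moreover have "6 * F = 6 * n - (n - 1) * n * (n + 1) / x" unfolding F_def using xpos by (simp add: field_simps)
    ultimately show ?thesis unfolding G_def by linarith
  qed
  have G_eq: "G = n * (6 - s)" unfolding G_def s_def using xpos by (simp add: field_simps power3_eq_cube power2_eq_square)
  have G0: "G \<ge> 0" using G_eq s2 n1 by simp
  have G2: "G^2 = x * (s * (6 - s)^2)"
    unfolding G_eq s_def using xpos by (simp add: field_simps power2_eq_square)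
  have e3: "exp 3 \<le> 2013/100 * (1::real)"
  proof -
    have "exp (3::real) = exp 1 ^ 3" by (simp flip: exp_of_nat_mult)
    also have "\<dots> \<le> (272/100) ^ 3" using e_less_272 by (intro power_mono) auto
    finally show ?thesis by (simp add: power3_eq_cube)
  qed
  have "exp 3 * x \<le> 2013/100 * x" using e3 xpos by (intro mult_right_mono) auto
  also have "\<dots> = x * (2013/100)" by simp
  also have "\<dots> \<le> x * (s * (6 - s)^2)" using poly_s[OF s1 s2] xpos by (intro mult_left_mono) auto
  finally have "exp 3 * x \<le> G^2" using G2 by simp
  then have "sqrt (exp 3 * x) \<le> sqrt (G^2)" by (rule real_sqrt_le_mono)
  then have "sqrt (exp 3 * x) \<le> G" using G0 by simp
  moreover have "sqrt (exp 3 * x) = exp (3/2) * sqrt x"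
  proof -
    have "sqrt (exp 3) = exp (3/2)"
      by (rule real_sqrt_unique) (simp_all add: power2_eq_square flip: exp_add)
    then show ?thesis by (simp add: real_sqrt_mult)
  qed
  ultimately have key: "exp (3/2) * sqrt x \<le> 6 * F" using FG by simp
  have "exp (3/2) * sqrt x \<ge> 0" using xpos by simp
  then have F0: "F \<ge> 0" using key by linarith
  have C: "exp x / (exp 1 * sqrt x) \<le> x ^ m / fact m"
  proof -
    have "fact m \<le> exp 1 * sqrt x * x ^ m / exp x" using fact_upper[OF m] unfolding x_def by simp
    then show ?thesis using xpos by (simp add: field_simps)
  qed
  have S: "(x ^ m / fact m) * F \<le> (\<Sum>k<m. x ^ k / fact k)"
    using poisson_partial[OF m Nm] unfolding F_def n_def x_def by simp
  have "exp x / (exp 1 * sqrt x) * F \<le> (x ^ m / fact m) * F"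
    using C F0 by (rule mult_right_mono)
  then have "exp x / (exp 1 * sqrt x) * F \<le> (\<Sum>k<m. x ^ k / fact k)" using S by linarith
  then have Q1: "exp (- x) * (exp x / (exp 1 * sqrt x) * F) \<le> exp (- x) * (\<Sum>k<m. x ^ k / fact k)"
    by (intro mult_left_mono) auto
  have Q2: "exp (- x) * (exp x / (exp 1 * sqrt x) * F) = F / (exp 1 * sqrt x)"
    by (simp add: exp_minus field_simps)
  have Q3: "exp (1/2) / 6 \<le> F / (exp 1 * sqrt x)"
  proof -
    have "exp (3/2::real) = exp 1 * exp (1/2)" by (simp flip: exp_add)
    then have "exp 1 * exp (1/2) * sqrt x \<le> 6 * F" using key by simp
    then show ?thesis using xpos by (simp add: field_simps)
  qed
  have "exp (1/2) / 6 \<le> exp (- x) * (\<Sum>k<m. x ^ k / fact k)"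
    using Q1 Q2 Q3 by linarith
  then show ?thesis unfolding x_def .
qed

definition chi1 :: "real \<Rightarrow> real" where
  "chi1 y = (if 0 < y then exp (- y / 2) / sqrt (2 * pi * y) else 0)"

lemma chi1_nonneg[simp]: "0 \<le> chi1 y"
  by (simp add: chi1_def)

lemma chi1_measurable[measurable]: "chi1 \<in> borel_measurable borel"
  unfolding chi1_def by measurable

lemma chi1_sq: "x > 0 \<Longrightarrow> chi1 (x^2) * (2 * x) = 2 * std_normal_density x"
proof -
  assume x: "x > 0"
  have "sqrt (2 * pi * x^2) = sqrt (2 * pi) * x" using x by (simp add: real_sqrt_mult)
  then show ?thesis using x by (simp add: chi1_def std_normal_density_def field_simps)
qed

lemma std_normal_even: "std_normal_density (- x) = std_normal_density x"
  by (simp add: std_normal_density_def)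

lemma half_normal_chi1:
  fixes b :: real assumes b: "0 \<le> b"
  shows "(\<integral>\<^sup>+x. ennreal (chi1 x * indicator {0..b^2} x) \<partial>lborel) =
         2 * (\<integral>\<^sup>+x. ennreal (std_normal_density x * indicator {0..b} x) \<partial>lborel)"
proof -
  have "(\<integral>\<^sup>+x. ennreal (chi1 x * indicator {(\<lambda>x. x^2) 0..(\<lambda>x. x^2) b} x) \<partial>lborel) =
        (\<integral>\<^sup>+x. ennreal (chi1 ((\<lambda>x. x^2) x) * (2 * x) * indicator {0..b} x) \<partial>lborel)"
  proof (rule nn_integral_substitution[where g="\<lambda>x. x^2" and g'="\<lambda>x. 2 * x"])
    show "set_borel_measurable borel {(\<lambda>x. x^2) 0..(\<lambda>x. x^2) b} chi1"
      unfolding set_borel_measurable_def by measurable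
  qed (use b in \<open>auto intro!: derivative_eq_intros continuous_intros\<close>)
  also have "\<dots> = (\<integral>\<^sup>+x. ennreal (2 * std_normal_density x * indicator {0..b} x) \<partial>lborel)"
  proof (rule nn_integral_cong_AE)
    show "AE x in lborel. ennreal (chi1 ((\<lambda>x. x^2) x) * (2 * x) * indicator {0..b} x) =
            ennreal (2 * std_normal_density x * indicator {0..b} x)"
      using AE_lborel_singleton[of 0]
    proof eventually_elim
      case (elim x)
      then show ?case by (cases "x > 0") (auto simp: chi1_sq indicator_def)
    qed
  qed
  also have "\<dots> = 2 * (\<integral>\<^sup>+x. ennreal (std_normal_density x * indicator {0..b} x) \<partial>lborel)"
    by (subst nn_integral_cmult[symmetric]) (auto simp: ennreal_mult mult.assoc)
  finally show ?thesis by simp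
qed

lemma sym_normal:
  fixes b :: real assumes b: "0 \<le> b"
  shows "(\<integral>\<^sup>+x. ennreal (std_normal_density x * indicator {-b..b} x) \<partial>lborel) =
         2 * (\<integral>\<^sup>+x. ennreal (std_normal_density x * indicator {0..b} x) \<partial>lborel)"
proof -
  let ?I = "\<lambda>A. (\<integral>\<^sup>+x. ennreal (std_normal_density x * indicator A x) \<partial>lborel)"
  have "?I {-b..b} = (\<integral>\<^sup>+x. ennreal (std_normal_density x * indicator {-b..0} x) +
                             ennreal (std_normal_density x * indicator {0<..b} x) \<partial>lborel)"
    by (intro nn_integral_cong) (auto simp: indicator_def)
  also have "\<dots> = ?I {-b..0} + ?I {0<..b}"
    by (rule nn_integral_add) auto
  also have "?I {-b..0} = ?I {0..b}"
  proof -
    have "?I {-b..0} = ennreal \<bar>-1\<bar> * (\<integral>\<^sup>+x. ennreal (std_normal_density (0 + -1 * x) * indicator {-b..0} (0 + -1 * x)) \<partial>lborel)"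
      by (rule nn_integral_real_affine) auto
    also have "\<dots> = ?I {0..b}"
      by (auto intro!: nn_integral_cong simp: std_normal_even indicator_def)
    finally show ?thesis .
  qed
  also have "?I {0<..b} = ?I {0..b}"
  proof (rule nn_integral_cong_AE)
    show "AE x in lborel. ennreal (std_normal_density x * indicator {0<..b} x) = ennreal (std_normal_density x * indicator {0..b} x)"
      using AE_lborel_singleton[of 0] by eventually_elim (auto simp: indicator_def)
  qed
  finally show ?thesis by (simp add: mult_2)
qed


lemma (in prob_space) distributed_square_std_normal:
  assumes D: "distributed M lborel X (\<lambda>x. ennreal (std_normal_density x))"
  shows "distributed M lborel (\<lambda>\<omega>. (X \<omega>)^2) (\<lambda>y. ennreal (chi1 y))"
proof -
  have Xm[measurable]: "X \<in> borel_measurable M" using distributed_measurable[OF D] by simp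
  show ?thesis
  proof (rule distributedI_borel_atMost[where g="\<lambda>a. measure M {x\<in>space M. (X x)^2 \<le> a}"])
    show "(\<lambda>\<omega>. (X \<omega>)^2) \<in> borel_measurable M" by measurable
    show "chi1 \<in> borel_measurable borel" by measurable
    show "AE x in lborel. 0 \<le> chi1 x" by simp
    fix a :: real
    show "emeasure M {x\<in>space M. (X x)^2 \<le> a} = ennreal (measure M {x\<in>space M. (X x)^2 \<le> a})"
      by (simp add: emeasure_eq_measure)
    show "(\<integral>\<^sup>+x. ennreal (chi1 x * indicator {..a} x) \<partial>lborel) = ennreal (measure M {x\<in>space M. (X x)^2 \<le> a})"
    proof (cases "a < 0")
      case True
      have "(\<integral>\<^sup>+x. ennreal (chi1 x * indicator {..a} x) \<partial>lborel) = (\<integral>\<^sup>+(x::real). 0 \<partial>lborel)"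
        using True by (intro nn_integral_cong) (auto simp: chi1_def indicator_def)
      moreover have E: "{x\<in>space M. (X x)^2 \<le> a} = {}"
        using True by (auto simp: not_le) (smt (verit) zero_le_power2)
      ultimately show ?thesis by (simp only: E measure_empty) simp
    next
      case False
      define b where "b = sqrt a"
      have b0: "0 \<le> b" using False unfolding b_def by simp
      have ab: "a = b^2" using False unfolding b_def by simp
      have set_eq: "{x\<in>space M. (X x)^2 \<le> a} = X -` {-b..b} \<inter> space M"
      proof -
        have "\<And>y. y^2 \<le> a \<longleftrightarrow> -b \<le> y \<and> y \<le> b"
        proof -
          fix y :: real
          have "y^2 \<le> a \<longleftrightarrow> sqrt (y^2) \<le> sqrt a" by (simp only: real_sqrt_le_iff)
          also have "\<dots> \<longleftrightarrow> \<bar>y\<bar> \<le> b" unfolding b_def by simp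
          finally show "y^2 \<le> a \<longleftrightarrow> -b \<le> y \<and> y \<le> b" by linarith
        qed
        then show ?thesis by (simp add: set_eq_iff conj_commute conj_left_commute)
      qed
      have "emeasure M {x\<in>space M. (X x)^2 \<le> a} = (\<integral>\<^sup>+x. ennreal (std_normal_density x) * indicator {-b..b} x \<partial>lborel)"
        unfolding set_eq by (rule distributed_emeasure[OF D]) simp
      also have "\<dots> = (\<integral>\<^sup>+x. ennreal (std_normal_density x * indicator {-b..b} x) \<partial>lborel)"
        by (intro nn_integral_cong) (simp add: indicator_def)
      also have "\<dots> = 2 * (\<integral>\<^sup>+x. ennreal (std_normal_density x * indicator {0..b} x) \<partial>lborel)"
        by (rule sym_normal[OF b0])
      also have "\<dots> = (\<integral>\<^sup>+x. ennreal (chi1 x * indicator {0..b^2} x) \<partial>lborel)"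
        by (rule half_normal_chi1[OF b0, symmetric])
      also have "\<dots> = (\<integral>\<^sup>+x. ennreal (chi1 x * indicator {..a} x) \<partial>lborel)"
        unfolding ab[symmetric] by (intro nn_integral_cong) (auto simp: chi1_def indicator_def)
      finally show ?thesis by (simp add: emeasure_eq_measure)
    qed
  qed
qed


lemma arcsin_integral:
  fixes x :: real assumes x: "x > 0"
  shows "((\<lambda>y. 1 / sqrt (y * (x - y))) has_integral pi) {0..x}"
proof -
  let ?F = "\<lambda>y. arcsin ((2 * y - x) / x)"
  have "((\<lambda>y. 1 / sqrt (y * (x - y))) has_integral (?F x - ?F 0)) {0..x}"
  proof (rule fundamental_theorem_of_calculus_interior)
    show "0 \<le> x" using x by simp
    show "continuous_on {0..x} ?F"
      using x by (intro continuous_intros) (auto simp: field_simps)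
    fix y assume y: "y \<in> {0<..<x}"
    define u where "u = (2 * y - x) / x"
    have u1: "-1 < u" "u < 1" using y x unfolding u_def by (auto simp: field_simps)
    have d1: "((\<lambda>y. (2 * y - x) / x) has_real_derivative 2 / x) (at y)"
      using x by (auto intro!: derivative_eq_intros)
    have d2: "DERIV arcsin ((2 * y - x) / x) :> inverse (sqrt (1 - u^2))"
      using DERIV_arcsin[OF u1] unfolding u_def .
    have d: "(?F has_real_derivative (inverse (sqrt (1 - u^2)) * (2 / x))) (at y)"
      using DERIV_chain2[OF d2 d1] .
    have s2: "(sqrt (y * (x - y)))^2 = y * (x - y)" using y by simp
    have r1: "(2 * sqrt (y * (x - y)) / x)^2 = 4 * (y * (x - y)) / x^2"
      by (simp add: power_divide power_mult_distrib s2)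
    have r2: "1 - u^2 = 4 * (y * (x - y)) / x^2"
      unfolding u_def using x by (simp add: power_divide divide_simps) (simp add: power2_eq_square algebra_simps)
    have "1 - u^2 = (2 * sqrt (y * (x - y)) / x)^2" using r1 r2 by simp
    then have "sqrt (1 - u^2) = 2 * sqrt (y * (x - y)) / x"
      using x y by simp
    moreover have "sqrt (y * (x - y)) > 0" using y by simp
    ultimately have "inverse (sqrt (1 - u^2)) * (2 / x) = 1 / sqrt (y * (x - y))"
      using x by (simp add: field_simps)
    then show "(?F has_vector_derivative 1 / sqrt (y * (x - y))) (at y)"
      using d by (simp add: has_real_derivative_iff_has_vector_derivative)
  qed
  moreover have "?F x - ?F 0 = pi" using x by simp
  ultimately show ?thesis by simp
qed

lemma conv_chi1:
  fixes z :: real assumes "z \<noteq> 0"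
  shows "(\<integral>\<^sup>+y. ennreal (chi1 (z - y)) * ennreal (chi1 y) \<partial>lborel) = ennreal (exponential_density (1/2) z)"
proof (cases "z < 0")
  case True
  have "(\<integral>\<^sup>+y. ennreal (chi1 (z - y)) * ennreal (chi1 y) \<partial>lborel) = (\<integral>\<^sup>+(y::real). 0 \<partial>lborel)"
    using True by (intro nn_integral_cong) (auto simp: chi1_def)
  then show ?thesis using True by (simp add: exponential_density_def)
next
  case False
  then have z: "z > 0" using assms by simp
  define c where "c = exp (- z / 2) / (2 * pi)"
  have c0: "c \<ge> 0" unfolding c_def by simp
  have pw: "ennreal (chi1 (z - y)) * ennreal (chi1 y) = ennreal c * (ennreal (1 / sqrt (y * (z - y))) * indicator {0..z} y)" for y
  proof (cases "0 < y \<and> y < z")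
    case True
    have "sqrt (2 * pi * (z - y)) * sqrt (2 * pi * y) = sqrt ((2 * pi)^2 * (y * (z - y)))"
      by (simp only: real_sqrt_mult[symmetric]) (simp add: power2_eq_square algebra_simps)
    also have "\<dots> = 2 * pi * sqrt (y * (z - y))"
      by (simp only: real_sqrt_mult real_sqrt_abs) simp
    finally have "sqrt (2 * pi * (z - y)) * sqrt (2 * pi * y) = 2 * pi * sqrt (y * (z - y))" .
    moreover have "exp (- (z - y) / 2) * exp (- y / 2) = exp (- z / 2)"
      by (simp flip: exp_add add: field_simps)
    ultimately have "(exp (- (z - y) / 2) * exp (- y / 2)) / (sqrt (2 * pi * (z - y)) * sqrt (2 * pi * y))
        = exp (- z / 2) / (2 * pi * sqrt (y * (z - y)))" by simp
    moreover have "chi1 (z - y) * chi1 y = (exp (- (z - y) / 2) * exp (- y / 2)) / (sqrt (2 * pi * (z - y)) * sqrt (2 * pi * y))"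
      using True by (simp add: chi1_def)
    moreover have "exp (- z / 2) / (2 * pi * sqrt (y * (z - y))) = c * (1 / sqrt (y * (z - y)))"
      unfolding c_def by simp
    ultimately have "chi1 (z - y) * chi1 y = c * (1 / sqrt (y * (z - y)))" by simp
    then show ?thesis using True c0
      by (simp add: ennreal_mult[symmetric] indicator_def)
  next
    case False
    then have "y \<le> 0 \<or> z \<le> y" by auto
    then show ?thesis using z
      by (auto simp: chi1_def indicator_def)
  qed
  have "(\<integral>\<^sup>+y. ennreal (chi1 (z - y)) * ennreal (chi1 y) \<partial>lborel)
        = ennreal c * (\<integral>\<^sup>+y. ennreal (1 / sqrt (y * (z - y))) * indicator {0..z} y \<partial>lborel)"
    unfolding pw by (rule nn_integral_cmult) simp
  also have "(\<integral>\<^sup>+y. ennreal (1 / sqrt (y * (z - y))) * indicator {0..z} y \<partial>lborel) = ennreal pi"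
    by (rule nn_integral_has_integral_lebesgue'[OF _ arcsin_integral[OF z]]) auto
  also have "ennreal c * ennreal pi = ennreal (exponential_density (1/2) z)"
  proof -
    have "c * pi = exponential_density (1/2) z"
      using z unfolding c_def exponential_density_def by simp
    then show ?thesis using c0 by (simp add: ennreal_mult[symmetric])
  qed
  finally show ?thesis .
qed

lemma (in prob_space) sum_chi1_exponential:
  assumes indep: "indep_var borel Y1 borel Y2"
    and D1: "distributed M lborel Y1 (\<lambda>y. ennreal (chi1 y))"
    and D2: "distributed M lborel Y2 (\<lambda>y. ennreal (chi1 y))"
  shows "distributed M lborel (\<lambda>\<omega>. Y1 \<omega> + Y2 \<omega>) (\<lambda>z. ennreal (exponential_density (1/2) z))"
proof -
  have C: "distributed M lborel (\<lambda>\<omega>. Y1 \<omega> + Y2 \<omega>) (\<lambda>z. \<integral>\<^sup>+y. ennreal (chi1 (z - y)) * ennreal (chi1 y) \<partial>lborel)"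
    by (rule distributed_convolution[OF indep D1 D2])
  show ?thesis
  proof (subst distributed_cong_density[symmetric])
    show "AE z in lborel. (\<integral>\<^sup>+y. ennreal (chi1 (z - y)) * ennreal (chi1 y) \<partial>lborel) = ennreal (exponential_density (1/2) z)"
      using AE_lborel_singleton[of 0] by eventually_elim (rule conv_chi1, simp)
    show "(\<lambda>z. ennreal (exponential_density (1/2) z)) \<in> borel_measurable lborel" by simp
    show "(\<lambda>z. \<integral>\<^sup>+y. ennreal (chi1 (z - y)) * ennreal (chi1 y) \<partial>lborel) \<in> borel_measurable lborel"
      using distributed_borel_measurable[OF C] .
  qed (rule C)
qed

lemma sum_pairs:
  fixes f :: "nat \<Rightarrow> real"
  shows "(\<Sum>i<2*m. f i) = (\<Sum>j<m. f (2*j) + f (2*j+1))"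
  by (induction m) (simp_all add: sum.lessThan_Suc)

lemma meas_sq: "i \<in> I \<Longrightarrow> (\<lambda>f. (f i)^2 :: real) \<in> borel_measurable (PiM I (\<lambda>_. borel))"
  by (intro borel_measurable_power measurable_component_singleton[where M="\<lambda>_. borel"]) auto

lemma meas_sq2: "i \<in> I \<Longrightarrow> j \<in> I \<Longrightarrow> (\<lambda>f. (f i)^2 + (f j)^2 :: real) \<in> borel_measurable (PiM I (\<lambda>_. borel))"
  by (intro borel_measurable_add meas_sq) auto

lemma (in prob_space) indep_squares:
  fixes X :: "'i \<Rightarrow> 'a \<Rightarrow> real"
  assumes indep: "indep_vars (\<lambda>_. borel) X I" and "i \<in> I" "j \<in> I" "i \<noteq> j"
  shows "indep_var borel (\<lambda>\<omega>. (X i \<omega>)^2) borel (\<lambda>\<omega>. (X j \<omega>)^2)"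
proof -
  have "indep_var borel ((\<lambda>f. (f i)^2) \<circ> (\<lambda>\<omega>. restrict (\<lambda>i. X i \<omega>) {i}))
                   borel ((\<lambda>f. (f j)^2) \<circ> (\<lambda>\<omega>. restrict (\<lambda>i. X i \<omega>) {j}))"
    using assms by (intro indep_var_compose[OF indep_var_restrict[OF indep]] meas_sq) auto
  also have "((\<lambda>f. (f i)^2) \<circ> (\<lambda>\<omega>. restrict (\<lambda>i. X i \<omega>) {i})) = (\<lambda>\<omega>. (X i \<omega>)^2)" by auto
  also have "((\<lambda>f. (f j)^2) \<circ> (\<lambda>\<omega>. restrict (\<lambda>i. X i \<omega>) {j})) = (\<lambda>\<omega>. (X j \<omega>)^2)" by auto
  finally show ?thesis .
qed

lemma (in prob_space) indep_pairs:
  fixes X :: "nat \<Rightarrow> 'a \<Rightarrow> real"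
  assumes indep: "indep_vars (\<lambda>_. borel) X {..<k}" and mk: "2 * m \<le> k"
  shows "indep_vars (\<lambda>_. borel) (\<lambda>j \<omega>. (X (2*j) \<omega>)^2 + (X (2*j+1) \<omega>)^2) {..<m}"
proof -
  define K where "K = (\<lambda>j::nat. {2*j, 2*j+1})"
  have R: "indep_vars (\<lambda>j. PiM (K j) (\<lambda>_. borel)) (\<lambda>j \<omega>. restrict (\<lambda>i. X i \<omega>) (K j)) {..<m}"
  proof (rule indep_vars_restrict[OF indep])
    show "\<And>j. j \<in> {..<m} \<Longrightarrow> K j \<subseteq> {..<k}" using mk unfolding K_def by auto
    show "disjoint_family_on K {..<m}" unfolding K_def disjoint_family_on_def by auto
  qed
  have "indep_vars (\<lambda>_. borel) (\<lambda>j \<omega>. (\<lambda>f. (f (2*j))^2 + (f (2*j+1))^2) (restrict (\<lambda>i. X i \<omega>) (K j))) {..<m}"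
  proof (rule indep_vars_compose2[OF R])
    fix j assume "j \<in> {..<m}"
    have "2*j \<in> K j" "2*j+1 \<in> K j" unfolding K_def by auto
    from meas_sq2[OF this]
    show "(\<lambda>f::nat\<Rightarrow>real. (f (2*j))^2 + (f (2*j+1))^2) \<in> borel_measurable (PiM (K j) (\<lambda>_. borel))" .
  qed
  moreover have "\<And>j. (\<lambda>\<omega>. (\<lambda>f. (f (2*j))^2 + (f (2*j+1))^2) (restrict (\<lambda>i. X i \<omega>) (K j)))
      = (\<lambda>\<omega>. (X (2*j) \<omega>)^2 + (X (2*j+1) \<omega>)^2)"
    unfolding K_def by auto
  ultimately show ?thesis by simp
qed

lemma (in prob_space) chi_even_erlang:
  fixes X :: "nat \<Rightarrow> 'a \<Rightarrow> real"
  assumes indep: "indep_vars (\<lambda>_. borel) X {..<k}"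
    and D: "\<And>i. i < k \<Longrightarrow> distributed M lborel (X i) (\<lambda>x. ennreal (std_normal_density x))"
    and m: "1 \<le> m" "2 * m \<le> k"
  shows "distributed M lborel (\<lambda>\<omega>. \<Sum>i<2*m. (X i \<omega>)^2) (erlang_density (m - 1) (1/2))"
proof -
  define Z where "Z = (\<lambda>j \<omega>. (X (2*j) \<omega>)^2 + (X (2*j+1) \<omega>)^2)"
  have expZ: "distributed M lborel (Z j) (exponential_density (1/2))" if j: "j \<in> {..<m}" for j
  proof -
    have jk: "2*j < k" "2*j+1 < k" using j m by auto
    have "distributed M lborel (\<lambda>\<omega>. (X (2*j) \<omega>)^2 + (X (2*j+1) \<omega>)^2) (\<lambda>z. ennreal (exponential_density (1/2) z))"
      by (rule sum_chi1_exponential[OF indep_squares[OF indep] distributed_square_std_normal[OF D] distributed_square_std_normal[OF D]])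
         (use jk in auto)
    then show ?thesis unfolding Z_def by simp
  qed
  have indZ: "indep_vars (\<lambda>_. borel) Z {..<m}"
    unfolding Z_def by (rule indep_pairs[OF indep m(2)])
  have "distributed M lborel (\<lambda>\<omega>. \<Sum>j\<in>{..<m}. Z j \<omega>) (erlang_density (card {..<m} - 1) (1/2))"
  proof (rule exponential_distributed_sum[OF _ _ _ expZ indZ])
    have "0 \<in> {..<m}" using m by simp
    then show "{..<m} \<noteq> {}" by blast
  qed auto
  moreover have "(\<lambda>\<omega>. \<Sum>j\<in>{..<m}. Z j \<omega>) = (\<lambda>\<omega>. \<Sum>i<2*m. (X i \<omega>)^2)"
    unfolding Z_def by (simp add: sum_pairs)
  ultimately show ?thesis by simp
qed


lemma tail_bound:
  fixes m :: nat and V :: real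
  assumes m: "m \<ge> 1" and V: "real m \<le> V"
  shows "exp (real m - V) * (exp (1/2) / 6) \<le> exp (- V) * (\<Sum>n<m. V ^ n / fact n)"
proof -
  have "(\<Sum>n<m. real m ^ n / fact n) \<le> (\<Sum>n<m. V ^ n / fact n)"
    using V by (intro sum_mono divide_right_mono power_mono) auto
  then have "exp (- V) * (\<Sum>n<m. real m ^ n / fact n) \<le> exp (- V) * (\<Sum>n<m. V ^ n / fact n)"
    by (intro mult_left_mono) auto
  moreover have "exp (real m - V) * (exp (1/2) / 6) \<le> exp (real m - V) * (exp (- real m) * (\<Sum>n<m. real m ^ n / fact n))"
    using poisson_main[OF m] by (intro mult_left_mono) auto
  moreover have "exp (real m - V) * (exp (- real m) * (\<Sum>n<m. real m ^ n / fact n)) = exp (- V) * (\<Sum>n<m. real m ^ n / fact n)"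
    by (simp add: mult.assoc[symmetric] exp_add[symmetric])
  ultimately show ?thesis by linarith
qed

lemma (in prob_space) erlang_tail:
  assumes D: "distributed M lborel S (erlang_density (m - 1) (1/2))" and m: "m \<ge> 1" and t: "0 \<le> t"
  shows "measure M {\<omega>\<in>space M. t < S \<omega>} = exp (- (t/2)) * (\<Sum>n<m. (t/2) ^ n / fact n)"
proof -
  have "measure M {\<omega>\<in>space M. t < S \<omega>} = 1 - erlang_CDF (m - 1) (1/2) t"
    by (rule erlang_distributed_gt[OF D]) (use t in auto)
  also have "\<dots> = (\<Sum>n\<le>m - 1. ((1/2) * t) ^ n * exp (- (1/2) * t) / fact n)"
    using t unfolding erlang_CDF_def by simp
  also have "{..m - 1} = {..<m}" using m by auto
  also have "(\<Sum>n<m. ((1/2) * t) ^ n * exp (- (1/2) * t) / fact n) = exp (- (t/2)) * (\<Sum>n<m. (t/2) ^ n / fact n)"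
    by (simp add: sum_distrib_left field_simps)
  finally show ?thesis .
qed

lemma q_integral:
  fixes c :: real assumes c: "c > 0"
  shows "((\<lambda>y. exp (- y / 2) / sqrt (2 * pi * (c + 3))) has_integral
           (2 * (exp (- c / 2) - exp (- (c + 3) / 2)) / sqrt (2 * pi * (c + 3)))) {c..c+3}"
proof -
  define s where "s = sqrt (2 * pi * (c + 3))"
  have s0: "s > 0" unfolding s_def using c by simp
  let ?s = s
  let ?F = "\<lambda>y. - 2 * exp (- y / 2) / s"
  have "((\<lambda>y. exp (- y / 2) / ?s) has_integral (?F (c + 3) - ?F c)) {c..c+3}"
  proof (rule fundamental_theorem_of_calculus_interior)
    show "c \<le> c + 3" by simp
    show "continuous_on {c..c + 3} ?F" using s0 by (intro continuous_intros) auto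
    fix y assume "y \<in> {c<..<c + 3}"
    have "(?F has_real_derivative exp (- y / 2) / ?s) (at y)"
      using s0 by (auto intro!: derivative_eq_intros simp: field_simps)
    then show "(?F has_vector_derivative exp (- y / 2) / ?s) (at y)"
      by (simp add: has_real_derivative_iff_has_vector_derivative)
  qed
  moreover have "?F (c + 3) - ?F c = 2 * (exp (- c / 2) - exp (- (c + 3) / 2)) / ?s"
    using s0 by (simp add: divide_simps)
  ultimately show ?thesis unfolding s_def by simp
qed

lemma k1_ineq:
  fixes \<epsilon> :: real assumes e: "\<epsilon> \<ge> 0"
  shows "1 / (3 * \<epsilon> + 6) * exp (- \<epsilon> / 2) \<le> 2 * (exp (- (1 + \<epsilon>) / 2) - exp (- (1 + \<epsilon> + 3) / 2)) / sqrt (2 * pi * (1 + \<epsilon> + 3))"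
proof -
  define A where "A = exp (- 1 / 2 :: real)"
  define B where "B = exp (- 3 / 2 :: real)"
  define E where "E = exp (- \<epsilon> / 2)"
  have E0: "E > 0" unfolding E_def by simp
  have h1: "exp (- (1 + \<epsilon>) / 2) = A * E" unfolding A_def E_def by (simp flip: exp_add add: field_simps)
  have h2: "exp (- (1 + \<epsilon> + 3) / 2) = A * E * B" unfolding A_def B_def E_def by (simp flip: exp_add add: field_simps)
  have eh: "exp (1/2::real) \<le> 165/100"
  proof (rule ccontr)
    assume "\<not> exp (1/2::real) \<le> 165/100"
    then have "(165/100::real)^2 \<le> (exp (1/2))^2" by (intro power_mono) auto
    also have "(exp (1/2::real))^2 = exp 1" by (simp add: power2_eq_square flip: exp_add)
    finally show False using e_less_272 by (simp add: power2_eq_square)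
  qed
  have A1: "100/165 \<le> A"
  proof -
    have "A = 1 / exp (1/2)" unfolding A_def by (simp add: exp_minus field_simps)
    moreover have "1 / (165/100) \<le> 1 / exp (1/2::real)" using eh by (intro divide_left_mono) auto
    ultimately show ?thesis by simp
  qed
  have e27: "27/10 \<le> exp (1::real)" using e_approx_32 by (simp add: abs_if split: if_splits)
  have e32: "4 \<le> exp (3/2::real)"
  proof (rule ccontr)
    assume "\<not> 4 \<le> exp (3/2::real)"
    then have "(exp (3/2::real))^2 \<le> 4^2" by (intro power_mono) auto
    moreover have "(exp (3/2::real))^2 = exp 1 * exp 1 * exp 1"
      by (simp add: power2_eq_square flip: exp_add)
    moreover have "(27/10::real) * (27/10) * (27/10) \<le> exp 1 * exp 1 * exp 1"
      using e27 by (intro mult_mono) auto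
    ultimately show False by (simp add: power2_eq_square)
  qed
  have B1: "B \<le> 1/4"
  proof -
    have "B = 1 / exp (3/2)" unfolding B_def by (simp add: exp_minus field_simps)
    moreover have "1 / exp (3/2::real) \<le> 1 / 4" using e32 by (intro divide_left_mono) auto
    ultimately show ?thesis by simp
  qed
  define s where "s = sqrt (2 * pi * (1 + \<epsilon> + 3))"
  have s0: "s > 0" unfolding s_def using e by simp
  have s1: "s \<le> 251/100 * (\<epsilon> + 2)"
  proof -
    have p: "2 * pi \<le> 63/10" using pi_approx(2) by simp
    have "2 * pi * (1 + \<epsilon> + 3) \<le> 63/10 * (1 + \<epsilon> + 3)" using p e by (intro mult_right_mono) auto
    also have "\<dots> = 63/10 * (4 + \<epsilon>)" by simp
    also have "\<dots> \<le> (251/100 * (\<epsilon> + 2))^2" using e by (simp add: power2_eq_square algebra_simps)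
    finally have "s \<le> sqrt ((251/100 * (\<epsilon> + 2))^2)" unfolding s_def by (rule real_sqrt_le_mono)
    then show ?thesis using e by simp
  qed
  define N0 where "N0 = 2 * (100/165) * E * (3/4)"
  have num: "N0 \<le> 2 * (A * E - A * E * B)"
  proof -
    have "2 * (A * E - A * E * B) = 2 * A * E * (1 - B)" by (simp add: algebra_simps)
    moreover have "(100/165) * E * (3/4) \<le> A * E * (1 - B)"
      using A1 B1 E0 by (intro mult_mono) auto
    ultimately show ?thesis unfolding N0_def by simp
  qed
  have "N0 / (251/100 * (\<epsilon> + 2)) \<le> 2 * (A * E - A * E * B) / s"
    by (rule frac_le) (use num s0 s1 E0 in \<open>auto simp: N0_def\<close>)
  moreover have "1 / (3 * \<epsilon> + 6) * E \<le> N0 / (251/100 * (\<epsilon> + 2))"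
    using e E0 unfolding N0_def by (simp add: field_simps)
  ultimately show ?thesis unfolding h1 h2 s_def[symmetric] E_def[symmetric] by linarith
qed

theorem mainTheorem5:
  fixes M :: "'a measure" and X :: "nat \<Rightarrow> 'a \<Rightarrow> real" and k :: nat and \<epsilon> :: real
  assumes "chi_square_rv M k X"
    and "\<epsilon> \<ge> 0"
  shows "measure M {\<omega> \<in> space M. (\<Sum>i<k. (X i \<omega>)\<^sup>2) \<ge> real k * (1 + \<epsilon>)}
           \<ge> 1 / (3 * sqrt (real k) * \<epsilon> + 6) * exp (- real k * \<epsilon> / 2)"
proof -
  have P: "prob_space M" and I: "prob_space.indep_vars M (\<lambda>_. borel) X {..<k}"
    and D: "\<forall>i<k. distributed M lborel (X i) (\<lambda>x. ennreal (std_normal_density x))"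
    using assms(1) unfolding chi_square_rv_def by auto
  interpret prob_space M by (rule P)
  have Dk: "\<And>i. i < k \<Longrightarrow> distributed M lborel (X i) (\<lambda>x. ennreal (std_normal_density x))"
    using D by auto
  have Xm: "\<And>i. i < k \<Longrightarrow> X i \<in> borel_measurable M"
    using Dk distributed_measurable by fastforce
  have e: "\<epsilon> \<ge> 0" by fact
  define R where "R = 1 / (3 * sqrt (real k) * \<epsilon> + 6) * exp (- real k * \<epsilon> / 2)"
  define E where "E = {\<omega> \<in> space M. (\<Sum>i<k. (X i \<omega>)\<^sup>2) \<ge> real k * (1 + \<epsilon>)}"
  have R6: "R \<le> exp (- real k * \<epsilon> / 2) / 6"
  proof -
    have se: "0 \<le> sqrt (real k) * \<epsilon>" using e by simp
    have "1 / (3 * sqrt (real k) * \<epsilon> + 6) \<le> 1 / 6"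
      using se by (intro divide_left_mono) (auto simp: mult.assoc)
    then have "R \<le> 1 / 6 * exp (- real k * \<epsilon> / 2)" unfolding R_def by (rule mult_right_mono) simp
    then show ?thesis by simp
  qed
  have Sk[measurable]: "(\<lambda>\<omega>. \<Sum>i<k. (X i \<omega>)\<^sup>2) \<in> borel_measurable M"
    using Xm by (intro borel_measurable_sum borel_measurable_power) auto
  have Ev: "E \<in> sets M" unfolding E_def by measurable
  have "R \<le> measure M E"
  proof -
    consider "k = 0" | "k = 1" | m where "m \<ge> 1" "2 * m \<le> k" "k \<le> 2 * m + 1"
    proof -
      assume h0: "k = 0 \<Longrightarrow> thesis" and h1: "k = 1 \<Longrightarrow> thesis"
        and h2: "\<And>m. 1 \<le> m \<Longrightarrow> 2 * m \<le> k \<Longrightarrow> k \<le> 2 * m + 1 \<Longrightarrow> thesis"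
      show thesis
      proof (cases "k \<le> 1")
        case True then show ?thesis using h0 h1 by linarith
      next
        case False
        then show ?thesis using h2[of "k div 2"] by linarith
      qed
    qed
    then show ?thesis
    proof cases
      case 1
      have "E = space M" unfolding E_def 1 by auto
      then have "measure M E = 1" by (simp add: prob_space)
      then show ?thesis unfolding R_def 1 by simp
    next
      case 2
      define c where "c = 1 + \<epsilon>"
      have c0: "c > 0" unfolding c_def using e by simp
      have DY: "distributed M lborel (\<lambda>\<omega>. (X 0 \<omega>)^2) (\<lambda>y. ennreal (chi1 y))"
        by (rule distributed_square_std_normal[OF Dk]) (simp add: 2)
      have EY: "E = (\<lambda>\<omega>. (X 0 \<omega>)^2) -` {c..} \<inter> space M"
        unfolding E_def c_def 2 by auto
      define q where "q = (\<lambda>y. exp (- y / 2) / sqrt (2 * pi * (c + 3)))"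
      define J where "J = 2 * (exp (- c / 2) - exp (- (c + 3) / 2)) / sqrt (2 * pi * (c + 3))"
      have "emeasure M E = (\<integral>\<^sup>+x. ennreal (chi1 x) * indicator {c..} x \<partial>lborel)"
        unfolding EY by (rule distributed_emeasure[OF DY]) simp
      also have "\<dots> \<ge> (\<integral>\<^sup>+x. ennreal (q x) * indicator {c..c+3} x \<partial>lborel)"
      proof (rule nn_integral_mono)
        fix x :: real
        show "ennreal (q x) * indicator {c..c+3} x \<le> ennreal (chi1 x) * indicator {c..} x"
        proof (cases "x \<in> {c..c+3}")
          case True
          then have x0: "x > 0" using c0 by simp
          have "sqrt (2 * pi * x) \<le> sqrt (2 * pi * (c + 3))" using True by simp
          then have "q x \<le> chi1 x"
            unfolding q_def chi1_def using x0 by (simp add: divide_left_mono)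
          then show ?thesis using True by (simp add: indicator_def)
        qed (simp add: indicator_def)
      qed
      finally have "(\<integral>\<^sup>+x. ennreal (q x) * indicator {c..c+3} x \<partial>lborel) \<le> emeasure M E" .
      moreover have "(\<integral>\<^sup>+x. ennreal (q x) * indicator {c..c+3} x \<partial>lborel) = ennreal J"
        unfolding q_def J_def by (rule nn_integral_has_integral_lebesgue'[OF _ q_integral[OF c0]]) (use c0 in simp)
      ultimately have "ennreal J \<le> ennreal (measure M E)" by (simp add: emeasure_eq_measure)
      then have "J \<le> measure M E" by (simp add: ennreal_le_iff)
      moreover have "R \<le> J"
        unfolding R_def J_def c_def 2 using k1_ineq[OF e] by simp
      ultimately show ?thesis by linarith
    next
      case 3
      note m = 3
      define t where "t = real k * (1 + \<epsilon>)"
      have t0: "t \<ge> 0" unfolding t_def using e by simp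
      have erl: "distributed M lborel (\<lambda>\<omega>. \<Sum>i<2*m. (X i \<omega>)^2) (erlang_density (m - 1) (1/2))"
        by (rule chi_even_erlang[OF I Dk m(1) m(2)])
      define F where "F = {\<omega>\<in>space M. t < (\<Sum>i<2*m. (X i \<omega>)^2)}"
      have FE: "F \<subseteq> E"
      proof
        fix \<omega> assume "\<omega> \<in> F"
        then have w: "\<omega> \<in> space M" "t < (\<Sum>i<2*m. (X i \<omega>)^2)" unfolding F_def by auto
        have "(\<Sum>i<2*m. (X i \<omega>)^2) \<le> (\<Sum>i<k. (X i \<omega>)^2)"
          using m by (intro sum_mono2) auto
        then show "\<omega> \<in> E" using w unfolding E_def t_def by auto
      qed
      have "measure M F \<le> measure M E" using FE Ev by (rule finite_measure_mono)
      moreover have "measure M F = exp (- (t/2)) * (\<Sum>n<m. (t/2) ^ n / fact n)"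
        unfolding F_def by (rule erlang_tail[OF erl m(1) t0])
      moreover have "exp (real m - t/2) * (exp (1/2) / 6) \<le> exp (- (t/2)) * (\<Sum>n<m. (t/2) ^ n / fact n)"
      proof (rule tail_bound[OF m(1)])
        have "real k / 2 \<le> t / 2" unfolding t_def using e by (simp add: algebra_simps)
        moreover have "real m \<le> real k / 2" using m by simp
        ultimately show "real m \<le> t / 2" by linarith
      qed
      moreover have "exp (- real k * \<epsilon> / 2) / 6 \<le> exp (real m - t/2) * (exp (1/2) / 6)"
      proof -
        have "- real k * \<epsilon> / 2 \<le> real m - t/2 + 1/2"
          unfolding t_def using m by (simp add: algebra_simps)
        then have "exp (- real k * \<epsilon> / 2) \<le> exp (real m - t/2 + 1/2)" by simp
        also have "\<dots> = exp (real m - t/2) * exp (1/2)" by (simp add: exp_add)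
        finally show ?thesis by simp
      qed
      ultimately show ?thesis using R6 by linarith
    qed
  qed
  then show ?thesis unfolding R_def E_def .
qed

end
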